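(* Let $G$ be a $1$-tuple regular finite group and let $N$ be a subgroup of $G$ that is a union of order classes. Then $C_G(N)$ is also a union of order classes.
   Context: A subgroup $N$ of $G$ is a union of order classes if for every $n\in\mathbb{N}$ it contains either all or none of the elements of order $n$ of $G$. A finite group $G$ is $1$-tuple regular if for all $g_1,h_1\in G$ of the same order there is a bijection $\Psi\colon G\to G$ such that for every $g\in G$ the assignment $g_1\mapsto h_1, g\mapsto\Psi(g)$ defines an isomorphism $\langle g_1,g\rangle\to\langle h_1,\Psi(g)\rangle$. *)

theory Defs
  imports "HOL-Algebra.Algebra"
begin

definition centralizer_of :: "('a, 'b) monoid_scheme \<Rightarrow> 'a set \<Rightarrow> 'a set" where
  "centralizer_of G N = {g \<in> carrier G. \<forall>n\<in>N. g \<otimes>\<^bsub>G\<^esub> n = n \<otimes>\<^bsub>G\<^esub> g}"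

definition union_of_order_classes :: "('a, 'b) monoid_scheme \<Rightarrow> 'a set \<Rightarrow> bool" where
  "union_of_order_classes G N \<longleftrightarrow>
     (\<forall>x\<in>carrier G. \<forall>y\<in>carrier G. group.ord G x = group.ord G y \<longrightarrow> (x \<in> N \<longleftrightarrow> y \<in> N))"

definition one_tuple_regular :: "('a, 'b) monoid_scheme \<Rightarrow> bool" where
  "one_tuple_regular G \<longleftrightarrow>
     (\<forall>g1\<in>carrier G. \<forall>h1\<in>carrier G. group.ord G g1 = group.ord G h1 \<longrightarrow>
        (\<exists>\<Psi>. bij_betw \<Psi> (carrier G) (carrier G) \<and>
           (\<forall>g\<in>carrier G. \<exists>\<phi>.
              \<phi> \<in> iso (G\<lparr>carrier := generate G {g1, g}\<rparr>) (G\<lparr>carrier := generate G {h1, \<Psi> g}\<rparr>)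
              \<and> \<phi> g1 = h1 \<and> \<phi> g = \<Psi> g)))"

end

theory Submission
  imports Defs
begin

lemma iso_sub_facts:
  fixes G (structure)
  assumes G: "group G" and H1: "subgroup H1 G" and H2: "subgroup H2 G"
    and phi: "\<phi> \<in> iso (G\<lparr>carrier := H1\<rparr>) (G\<lparr>carrier := H2\<rparr>)"
    and a: "a \<in> H1"
  shows "group.ord G (\<phi> a) = group.ord G a"
    and "\<And>b. b \<in> H1 \<Longrightarrow> a \<otimes>\<^bsub>G\<^esub> b = b \<otimes>\<^bsub>G\<^esub> a \<Longrightarrow> \<phi> a \<otimes>\<^bsub>G\<^esub> \<phi> b = \<phi> b \<otimes>\<^bsub>G\<^esub> \<phi> a"
proof -
  interpret group G by fact
  have g1: "group (G\<lparr>carrier := H1\<rparr>)" using subgroup.subgroup_is_group[OF H1 G] .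
  have g2: "group (G\<lparr>carrier := H2\<rparr>)" using subgroup.subgroup_is_group[OF H2 G] .
  have hom: "\<phi> \<in> hom (G\<lparr>carrier := H1\<rparr>) (G\<lparr>carrier := H2\<rparr>)" using phi by (simp add: iso_def)
  have inj: "inj_on \<phi> H1" using phi by (simp add: iso_def bij_betw_def)
  have aG: "a \<in> carrier G" using a subgroup.subset[OF H1] by auto
  have phia: "\<phi> a \<in> H2" using hom_in_carrier[OF hom] a by simp
  have phiaG: "\<phi> a \<in> carrier G" using phia subgroup.subset[OF H2] by auto
  have one1: "\<one> \<in> H1" using subgroup.one_closed[OF H1] by simp
  have phi1: "\<phi> \<one> = \<one>" using hom_one[OF hom g1 g2] by simp
  have powH1: "a [^] n \<in> H1" for n :: nat
  proof -
    have "a [^]\<^bsub>G\<lparr>carrier := H1\<rparr>\<^esub> n \<in> carrier (G\<lparr>carrier := H1\<rparr>)"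
      using monoid.nat_pow_closed[OF group.is_monoid[OF g1]] a by simp
    then show ?thesis by (simp flip: nat_pow_consistent)
  qed
  have eqn: "(\<phi> a) [^] n = \<one> \<longleftrightarrow> a [^] n = \<one>" for n :: nat
  proof -
    have "\<phi> (a [^]\<^bsub>G\<lparr>carrier := H1\<rparr>\<^esub> n) = (\<phi> a) [^]\<^bsub>G\<lparr>carrier := H2\<rparr>\<^esub> n"
      using hom_nat_pow[OF hom _ g1 g2] a by simp
    then have e: "\<phi> (a [^] n) = (\<phi> a) [^] n" by (simp flip: nat_pow_consistent)
    show ?thesis
    proof
      assume "(\<phi> a) [^] n = \<one>"
      then have "\<phi> (a [^] n) = \<phi> \<one>" using e phi1 by simp
      then show "a [^] n = \<one>" using inj_onD[OF inj _ powH1 one1] by blast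
    next
      assume "a [^] n = \<one>" then show "(\<phi> a) [^] n = \<one>" using e phi1 by simp
    qed
  qed
  show "group.ord G (\<phi> a) = group.ord G a"
  proof (rule dvd_antisym)
    have "a [^] ord a = \<one>" using pow_eq_id[OF aG] by simp
    then have "(\<phi> a) [^] ord a = \<one>" using eqn by simp
    then show "ord (\<phi> a) dvd ord a" using pow_eq_id[OF phiaG] by simp
    have "(\<phi> a) [^] ord (\<phi> a) = \<one>" using pow_eq_id[OF phiaG] by simp
    then have "a [^] ord (\<phi> a) = \<one>" using eqn by simp
    then show "ord a dvd ord (\<phi> a)" using pow_eq_id[OF aG] by simp
  qed
  fix b assume b: "b \<in> H1" and c: "a \<otimes> b = b \<otimes> a"
  have "\<phi> (a \<otimes>\<^bsub>G\<lparr>carrier := H1\<rparr>\<^esub> b) = \<phi> a \<otimes>\<^bsub>G\<lparr>carrier := H2\<rparr>\<^esub> \<phi> b"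
    using hom_mult[OF hom] a b by simp
  moreover have "\<phi> (b \<otimes>\<^bsub>G\<lparr>carrier := H1\<rparr>\<^esub> a) = \<phi> b \<otimes>\<^bsub>G\<lparr>carrier := H2\<rparr>\<^esub> \<phi> a"
    using hom_mult[OF hom] a b by simp
  ultimately show "\<phi> a \<otimes> \<phi> b = \<phi> b \<otimes> \<phi> a" using c by simp
qed

theorem lemma3p4:
  fixes G :: "('a, 'b) monoid_scheme" and N :: "'a set"
  assumes "group G" and "finite (carrier G)"
    and "one_tuple_regular G"
    and "subgroup N G" and "union_of_order_classes G N"
  shows "union_of_order_classes G (centralizer_of G N)"
proof -
  interpret group G by fact
  have NG: "N \<subseteq> carrier G" using subgroup.subset[OF assms(4)] .
  have main: "y \<in> centralizer_of G N"
    if x: "x \<in> carrier G" and y: "y \<in> carrier G" and o: "ord x = ord y"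
      and xc: "x \<in> centralizer_of G N" for x y
  proof -
    have T: "\<forall>g1\<in>carrier G. \<forall>h1\<in>carrier G. ord g1 = ord h1 \<longrightarrow>
        (\<exists>\<Psi>. bij_betw \<Psi> (carrier G) (carrier G) \<and>
           (\<forall>g\<in>carrier G. \<exists>\<phi>.
              \<phi> \<in> iso (G\<lparr>carrier := generate G {g1, g}\<rparr>) (G\<lparr>carrier := generate G {h1, \<Psi> g}\<rparr>)
              \<and> \<phi> g1 = h1 \<and> \<phi> g = \<Psi> g))"
      using assms(3) unfolding one_tuple_regular_def .
    have "\<exists>\<Psi>. bij_betw \<Psi> (carrier G) (carrier G) \<and>
           (\<forall>g\<in>carrier G. \<exists>\<phi>.
              \<phi> \<in> iso (G\<lparr>carrier := generate G {x, g}\<rparr>) (G\<lparr>carrier := generate G {y, \<Psi> g}\<rparr>)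
              \<and> \<phi> x = y \<and> \<phi> g = \<Psi> g)"
      by (rule T[rule_format, OF x y o])
    then obtain \<Psi> where bij: "bij_betw \<Psi> (carrier G) (carrier G)" and
      P0: "\<forall>g\<in>carrier G. \<exists>\<phi>.
              \<phi> \<in> iso (G\<lparr>carrier := generate G {x, g}\<rparr>) (G\<lparr>carrier := generate G {y, \<Psi> g}\<rparr>)
              \<and> \<phi> x = y \<and> \<phi> g = \<Psi> g"
      by (elim exE conjE)
    note P = P0[rule_format]
    have PsiG: "\<Psi> g \<in> carrier G" if "g \<in> carrier G" for g
      by (rule bij_betw_apply[OF bij that])
    have key: "ord (\<Psi> g) = ord g \<and> (x \<otimes>\<^bsub>G\<^esub> g = g \<otimes>\<^bsub>G\<^esub> x \<longrightarrow> y \<otimes>\<^bsub>G\<^esub> \<Psi> g = \<Psi> g \<otimes>\<^bsub>G\<^esub> y)"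
      if g: "g \<in> carrier G" for g
    proof -
      obtain \<phi> where phi: "\<phi> \<in> iso (G\<lparr>carrier := generate G {x, g}\<rparr>) (G\<lparr>carrier := generate G {y, \<Psi> g}\<rparr>)"
        and px: "\<phi> x = y" and pg: "\<phi> g = \<Psi> g" using P[OF g] by (elim exE conjE)
      have S1: "subgroup (generate G {x, g}) G" using generate_is_subgroup x g by simp
      have S2: "subgroup (generate G {y, \<Psi> g}) G" using generate_is_subgroup y PsiG[OF g] by simp
      have xin: "x \<in> generate G {x, g}" by (simp add: generate.incl)
      have gin: "g \<in> generate G {x, g}" by (simp add: generate.incl)
      have o1: "ord (\<phi> g) = ord g" by (rule iso_sub_facts(1)[OF assms(1) S1 S2 phi gin])
      have c1: "x \<otimes>\<^bsub>G\<^esub> g = g \<otimes>\<^bsub>G\<^esub> x \<Longrightarrow> \<phi> x \<otimes>\<^bsub>G\<^esub> \<phi> g = \<phi> g \<otimes>\<^bsub>G\<^esub> \<phi> x"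
        by (rule iso_sub_facts(2)[OF assms(1) S1 S2 phi xin gin])
      show ?thesis
        using o1 c1 unfolding px pg by blast
    qed
    have PsiN: "\<Psi> ` N \<subseteq> N"
    proof
      fix z assume "z \<in> \<Psi> ` N"
      then obtain n where n: "n \<in> N" and z: "z = \<Psi> n" by blast
      have nG: "n \<in> carrier G" using n NG by auto
      have "ord (\<Psi> n) = ord n" using key[OF nG] by blast
      then have "\<Psi> n \<in> N \<longleftrightarrow> n \<in> N"
        using assms(5) PsiG[OF nG] nG unfolding union_of_order_classes_def by blast
      then show "z \<in> N" using n z by blast
    qed
    have injN: "inj_on \<Psi> N" using bij NG by (meson bij_betw_def inj_on_subset)
    have finN: "finite N" using assms(2) NG finite_subset by blast
    have PsiNeq: "\<Psi> ` N = N"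
      using PsiN injN finN by (simp add: card_image card_subset_eq)
    show ?thesis unfolding centralizer_of_def
    proof (intro CollectI conjI ballI)
      show "y \<in> carrier G" by fact
      fix n assume "n \<in> N"
      then obtain m where m: "m \<in> N" and nm: "n = \<Psi> m" using PsiNeq by blast
      have mG: "m \<in> carrier G" using m NG by auto
      have "x \<otimes>\<^bsub>G\<^esub> m = m \<otimes>\<^bsub>G\<^esub> x" using xc m unfolding centralizer_of_def by auto
      then show "y \<otimes>\<^bsub>G\<^esub> n = n \<otimes>\<^bsub>G\<^esub> y" using key[OF mG] nm by auto
    qed
  qed
  show ?thesis unfolding union_of_order_classes_def
  proof (intro ballI impI iffI)
    fix x y assume "x \<in> carrier G" "y \<in> carrier G" "ord x = ord y"
    then show "x \<in> centralizer_of G N \<Longrightarrow> y \<in> centralizer_of G N"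
      and "y \<in> centralizer_of G N \<Longrightarrow> x \<in> centralizer_of G N"
      using main[of x y] main[of y x] by auto
  qed
qed

end
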